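(* Let $\mathcal{M}_H$ be a tetrahedral mesh of a polyhedral domain $\Omega\subset\mathbb{R}^3$ and $\mathcal{M}_h$ its uniform refinement (each tetrahedron split into eight by the edge midpoints, as in the standard regular refinement). For a mesh $\mathcal{M}$ let $$W(\mathcal{M})=\{v\in C^0(\overline\Omega): v|_K\in \mathbb{P}_2(K)\oplus\operatorname{span}\{b_{F}: F \text{ a face of } K\}\ \forall K\in\mathcal{M}\},$$ where for a face $F$ of $K$ with barycentric coordinates $\lambda_i,\lambda_j,\lambda_k$ of $K$ nonzero on $F$, $b_F=\lambda_i\lambda_j\lambda_k$ is the cubic face bubble. Let $E_H:W(\mathcal{M}_H)\to W(\mathcal{M}_h)$ be nodal interpolation at the degrees of freedom of $W(\mathcal{M}_h)$ (point values at the vertices, the edge midpoints, and the face barycenters of $\mathcal{M}_h$). Then for every $u_H\in W(\mathcal{M}_H)$ and every face $F$ of $\mathcal{M}_H$, $$(E_H u_H)|_F=u_H|_F,$$ in particular $\int_F E_Hu_H\,\mathrm{d}s=\int_F u_H\,\mathrm{d}s$ for every coarse face $F$ (and the same holds componentwise for vector fields in $[W(\mathcal{M}_H)]^3$, so normal fluxes across coarse faces are preserved).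
   Context: The space $W(\mathcal{M})$ is the continuous piecewise quadratic space enriched with cubic face bubbles (denoted $\mathbb{P}_2\oplus B^F_3$). Note that $W(\mathcal{M}_H)\not\subset W(\mathcal{M}_h)$ in general. *)

theory Defs
  imports "HOL-Analysis.Analysis"
begin

type_synonym pt = "real^3"

definition tetra :: "pt set \<Rightarrow> bool" where
  "tetra K \<longleftrightarrow> card K = 4 \<and> \<not> affine_dependent K"

definition mesh :: "pt set set \<Rightarrow> pt set \<Rightarrow> bool" where
  "mesh M Omega \<longleftrightarrow> finite M \<and> M \<noteq> {} \<and> (\<forall>K\<in>M. tetra K) \<and>
     (\<forall>K\<in>M. \<forall>K'\<in>M. convex hull K \<inter> convex hull K' = convex hull (K \<inter> K')) \<and>
     open Omega \<and> connected Omega \<and> closure Omega = (\<Union>K\<in>M. convex hull K)"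

text \<open>Regular (red) refinement of the tetrahedron with vertices a b c d: four corner
  tetrahedra and the inner octahedron cut into four along the diagonal joining
  the midpoints of ac and bd.\<close>
definition red_children :: "pt \<Rightarrow> pt \<Rightarrow> pt \<Rightarrow> pt \<Rightarrow> pt set set" where
  "red_children a b c d =
    (let ab = midpoint a b; ac = midpoint a c; ad = midpoint a d;
         bc = midpoint b c; bd = midpoint b d; cd = midpoint c d
     in {{a, ab, ac, ad}, {b, ab, bc, bd}, {c, ac, bc, cd}, {d, ad, bd, cd},
         {ac, bd, ab, bc}, {ac, bd, bc, cd}, {ac, bd, cd, ad}, {ac, bd, ad, ab}})"

text \<open>Mh is the uniform refinement of MH: each coarse tetrahedron is replaced by its
  eight red children (for some labelling of its vertices, i.e. some choice of diagonal).\<close>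
definition uniform_refinement :: "pt set set \<Rightarrow> pt set set \<Rightarrow> bool" where
  "uniform_refinement Mh MH \<longleftrightarrow>
     (\<exists>ch. (\<forall>K\<in>MH. \<exists>a b c d. K = {a, b, c, d} \<and> ch K = red_children a b c d) \<and>
           Mh = (\<Union>K\<in>MH. ch K))"

definition bary :: "pt set \<Rightarrow> pt \<Rightarrow> pt \<Rightarrow> real" where
  "bary K v x = (THE l. (\<forall>w. w \<notin> K \<longrightarrow> l w = 0) \<and> (\<Sum>w\<in>K. l w) = 1 \<and>
                        (\<Sum>w\<in>K. l w *\<^sub>R w) = x) v"

definition poly2 :: "(pt \<Rightarrow> real) \<Rightarrow> bool" where
  "poly2 p \<longleftrightarrow> (\<exists>c (b::pt) (A::real^3^3). \<forall>x. p x = c + b \<bullet> x + x \<bullet> (A *v x))"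

definition face_bubble :: "pt set \<Rightarrow> pt \<Rightarrow> pt \<Rightarrow> real" where
  "face_bubble K v x = (\<Prod>w\<in>K - {v}. bary K w x)"

definition P2B3 :: "pt set \<Rightarrow> (pt \<Rightarrow> real) \<Rightarrow> bool" where
  "P2B3 K u \<longleftrightarrow> (\<exists>p d. poly2 p \<and>
      (\<forall>x\<in>convex hull K. u x = p x + (\<Sum>v\<in>K. d v * face_bubble K v x)))"

definition W :: "pt set set \<Rightarrow> (pt \<Rightarrow> real) \<Rightarrow> bool" where
  "W M u \<longleftrightarrow> continuous_on (\<Union>K\<in>M. convex hull K) u \<and> (\<forall>K\<in>M. P2B3 K u)"

definition dof_nodes :: "pt set set \<Rightarrow> pt set" where
  "dof_nodes M = (\<Union>K\<in>M. K \<union> {midpoint a b | a b. a \<in> K \<and> b \<in> K \<and> a \<noteq> b}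
      \<union> {(1/3) *\<^sub>R (a + b + c) | a b c. a \<in> K \<and> b \<in> K \<and> c \<in> K \<and> a \<noteq> b \<and> a \<noteq> c \<and> b \<noteq> c})"

definition faces :: "pt set set \<Rightarrow> pt set set" where
  "faces M = {K - {v} | K v. K \<in> M \<and> v \<in> K}"

end

theory Submission
  imports Defs
begin

definition aff4 :: "pt \<Rightarrow> pt \<Rightarrow> pt \<Rightarrow> pt \<Rightarrow> bool" where
  "aff4 a b c d \<longleftrightarrow> (\<forall>x1 x2 x3 x4::real. x1+x2+x3+x4 = 0 \<longrightarrow>
     x1 *\<^sub>R a + x2 *\<^sub>R b + x3 *\<^sub>R c + x4 *\<^sub>R d = 0 \<longrightarrow> x1 = 0 \<and> x2 = 0 \<and> x3 = 0 \<and> x4 = 0)"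

lemma aff4_distinct:
  assumes "aff4 a b c d"
  shows "a \<noteq> b" "a \<noteq> c" "a \<noteq> d" "b \<noteq> c" "b \<noteq> d" "c \<noteq> d"
proof -
  note A = assms[unfolded aff4_def, rule_format]
  show "a \<noteq> b" using A[of 1 "-1" 0 0] by auto
  show "a \<noteq> c" using A[of 1 0 "-1" 0] by auto
  show "a \<noteq> d" using A[of 1 0 0 "-1"] by auto
  show "b \<noteq> c" using A[of 0 1 "-1" 0] by auto
  show "b \<noteq> d" using A[of 0 1 0 "-1"] by auto
  show "c \<noteq> d" using A[of 0 0 1 "-1"] by auto
qed

lemma poly2_plane:
  assumes "poly2 p"
  shows "\<exists>k0 k1 k2 k3 k4 k5. \<forall>s1 s2. p (s1 *\<^sub>R t1 + s2 *\<^sub>R t2 + (1 - s1 - s2) *\<^sub>R t3)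
     = k0 + k1 * s1 + k2 * s2 + k3 * s1 * s1 + k4 * s1 * s2 + k5 * s2 * s2"
proof -
  obtain c b A where pA: "\<And>x. p x = c + b \<bullet> x + x \<bullet> (A *v x)" using assms poly2_def by blast
  define u where "u = t1 - t3"
  define w where "w = t2 - t3"
  have X: "s1 *\<^sub>R t1 + s2 *\<^sub>R t2 + (1 - s1 - s2) *\<^sub>R t3 = t3 + s1 *\<^sub>R u + s2 *\<^sub>R w" for s1 s2
    by (simp add: u_def w_def algebra_simps)
  show ?thesis
    apply (rule exI[of _ "c + b \<bullet> t3 + t3 \<bullet> (A *v t3)"])
    apply (rule exI[of _ "b \<bullet> u + t3 \<bullet> (A *v u) + u \<bullet> (A *v t3)"])
    apply (rule exI[of _ "b \<bullet> w + t3 \<bullet> (A *v w) + w \<bullet> (A *v t3)"])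
    apply (rule exI[of _ "u \<bullet> (A *v u)"])
    apply (rule exI[of _ "u \<bullet> (A *v w) + w \<bullet> (A *v u)"])
    apply (rule exI[of _ "w \<bullet> (A *v w)"])
    unfolding X pA
    apply (simp add: algebra_simps inner_add_left inner_add_right)
    done
qed

lemma tetra_aff4:
  assumes "tetra {a,b,c,d}"
  shows "aff4 a b c d"
proof -
  have card: "card {a,b,c,d} = 4" and ind: "\<not> affine_dependent {a,b,c,d}"
    using assms tetra_def by auto
  have dist: "a \<noteq> b" "a \<noteq> c" "a \<noteq> d" "b \<noteq> c" "b \<noteq> d" "c \<noteq> d"
    using card by (auto simp: card_insert_if split: if_splits)
  show ?thesis unfolding aff4_def
  proof (intro allI impI)
    fix x1 x2 x3 x4 :: real
    assume s: "x1+x2+x3+x4 = 0" and v: "x1 *\<^sub>R a + x2 *\<^sub>R b + x3 *\<^sub>R c + x4 *\<^sub>R d = 0"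
    define U where "U = (\<lambda>z. if z = a then x1 else if z = b then x2 else if z = c then x3 else x4)"
    have "sum U {a,b,c,d} = 0" using s dist by (simp add: U_def)
    moreover have "sum (\<lambda>v. U v *\<^sub>R v) {a,b,c,d} = 0" using v dist by (simp add: U_def add.assoc)
    ultimately have "\<forall>v\<in>{a,b,c,d}. U v = 0"
      using ind affine_dependent_explicit_finite[of "{a,b,c,d}"] by auto
    then show "x1 = 0 \<and> x2 = 0 \<and> x3 = 0 \<and> x4 = 0" using dist by (simp add: U_def)
  qed
qed

lemma aff4_tetra:
  assumes "aff4 a b c d"
  shows "tetra {a,b,c,d}"
proof -
  note dist = aff4_distinct[OF assms]
  have "\<not> affine_dependent {a,b,c,d}"
  proof
    assume "affine_dependent {a,b,c,d}"
    then obtain U where U: "sum U {a,b,c,d} = 0" "\<exists>v\<in>{a,b,c,d}. U v \<noteq> 0"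
        "sum (\<lambda>v. U v *\<^sub>R v) {a,b,c,d} = 0"
      using affine_dependent_explicit_finite[of "{a,b,c,d}"] by auto
    have "U a + U b + U c + U d = 0" using U(1) dist by simp
    moreover have "U a *\<^sub>R a + U b *\<^sub>R b + U c *\<^sub>R c + U d *\<^sub>R d = 0"
      using U(3) dist by (simp add: add.assoc)
    ultimately have "U a = 0 \<and> U b = 0 \<and> U c = 0 \<and> U d = 0"
      using assms unfolding aff4_def by blast
    then show False using U(2) by auto
  qed
  then show ?thesis using dist unfolding tetra_def by auto
qed

lemma bary_eq:
  assumes A: "aff4 p0 p1 p2 p3" and s: "l0+l1+l2+l3 = 1"
    and x: "x = l0 *\<^sub>R p0 + l1 *\<^sub>R p1 + l2 *\<^sub>R p2 + l3 *\<^sub>R p3"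
  shows "bary {p0,p1,p2,p3} p0 x = l0 \<and> bary {p0,p1,p2,p3} p1 x = l1 \<and>
         bary {p0,p1,p2,p3} p2 x = l2 \<and> bary {p0,p1,p2,p3} p3 x = l3"
proof -
  note dist = aff4_distinct[OF A]
  define K where "K = {p0,p1,p2,p3}"
  define L where "L = (\<lambda>z. if z = p0 then l0 else if z = p1 then l1 else if z = p2 then l2
      else if z = p3 then l3 else 0)"
  let ?P = "\<lambda>l. (\<forall>w. w \<notin> K \<longrightarrow> l w = 0) \<and> (\<Sum>w\<in>K. l w) = 1 \<and> (\<Sum>w\<in>K. l w *\<^sub>R w) = x"
  have "(THE l. ?P l) = L"
  proof (rule the_equality)
    show "?P L" using s x dist by (auto simp: L_def K_def add.assoc)
  next
    fix l assume "?P l"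
    then have z: "\<forall>w. w \<notin> K \<longrightarrow> l w = 0" and s': "l p0 + l p1 + l p2 + l p3 = 1"
      and x': "l p0 *\<^sub>R p0 + l p1 *\<^sub>R p1 + l p2 *\<^sub>R p2 + l p3 *\<^sub>R p3 = x"
      using dist by (auto simp: K_def add.assoc)
    have "(l p0 - l0) + (l p1 - l1) + (l p2 - l2) + (l p3 - l3) = 0" using s s' by linarith
    moreover have "(l p0 - l0) *\<^sub>R p0 + (l p1 - l1) *\<^sub>R p1 + (l p2 - l2) *\<^sub>R p2 + (l p3 - l3) *\<^sub>R p3 = 0"
      using x x' by (simp add: algebra_simps)
    ultimately have "l p0 - l0 = 0 \<and> l p1 - l1 = 0 \<and> l p2 - l2 = 0 \<and> l p3 - l3 = 0"
      using A unfolding aff4_def by blast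
    then show "l = L" using z by (auto simp: L_def K_def)
  qed
  then show ?thesis using dist unfolding bary_def K_def[symmetric] by (auto simp: L_def)
qed

lemma bubble_face:
  assumes A: "aff4 p0 p1 p2 p3" and s: "l0+l1+l2 = 1"
  shows "(\<Sum>v\<in>{p0,p1,p2,p3}. d v * face_bubble {p0,p1,p2,p3} v (l0 *\<^sub>R p0 + l1 *\<^sub>R p1 + l2 *\<^sub>R p2))
      = d p3 * (l0 * l1 * l2)"
proof -
  note dist = aff4_distinct[OF A]
  let ?x = "l0 *\<^sub>R p0 + l1 *\<^sub>R p1 + l2 *\<^sub>R p2"
  have B: "bary {p0,p1,p2,p3} p0 ?x = l0 \<and> bary {p0,p1,p2,p3} p1 ?x = l1 \<and>
         bary {p0,p1,p2,p3} p2 ?x = l2 \<and> bary {p0,p1,p2,p3} p3 ?x = 0"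
    using bary_eq[OF A, of l0 l1 l2 0] s by simp
  have e0: "{p0,p1,p2,p3} - {p0} = {p1,p2,p3}" using dist by auto
  have e1: "{p0,p1,p2,p3} - {p1} = {p0,p2,p3}" using dist by auto
  have e2: "{p0,p1,p2,p3} - {p2} = {p0,p1,p3}" using dist by auto
  have e3: "{p0,p1,p2,p3} - {p3} = {p0,p1,p2}" using dist by auto
  show ?thesis using dist B
    by (simp add: face_bubble_def e0 e1 e2 e3 mult.assoc)
qed

lemma dof_vert: "K \<in> M \<Longrightarrow> a \<in> K \<Longrightarrow> a \<in> dof_nodes M"
  unfolding dof_nodes_def by blast
lemma dof_mid: "K \<in> M \<Longrightarrow> a \<in> K \<Longrightarrow> b \<in> K \<Longrightarrow> a \<noteq> b \<Longrightarrow> midpoint a b \<in> dof_nodes M"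
  unfolding dof_nodes_def
  apply (rule UN_I[of K], assumption)
  apply (rule UnI1, rule UnI2)
  apply (rule CollectI, rule exI[of _ a], rule exI[of _ b])
  apply simp
  done
lemma dof_bc: "K \<in> M \<Longrightarrow> a \<in> K \<Longrightarrow> b \<in> K \<Longrightarrow> c \<in> K \<Longrightarrow> a \<noteq> b \<Longrightarrow> a \<noteq> c \<Longrightarrow> b \<noteq> c
   \<Longrightarrow> (1/3) *\<^sub>R (a + b + c) \<in> dof_nodes M"
  unfolding dof_nodes_def
  apply (rule UN_I[of K], assumption)
  apply (rule UnI2)
  apply (rule CollectI, rule exI[of _ a], rule exI[of _ b], rule exI[of _ c])
  apply simp
  done

lemma tri_lemma:
  assumes A: "aff4 t1 t2 t3 w" and K: "{t1,t2,t3,w} \<in> M" and W: "W M EuH"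
    and dof: "\<forall>z\<in>dof_nodes M. EuH z = uH z"
    and Q: "\<And>s1 s2. 0 \<le> s1 \<Longrightarrow> 0 \<le> s2 \<Longrightarrow> s1 + s2 \<le> 1 \<Longrightarrow>
       uH (s1 *\<^sub>R t1 + s2 *\<^sub>R t2 + (1 - s1 - s2) *\<^sub>R t3) =
       k0 + k1 * s1 + k2 * s2 + k3 * s1 * s1 + k4 * s1 * s2 + k5 * s2 * s2 + kk * (s1 * s2 * (1 - s1 - s2))"
    and s: "0 \<le> s1" "0 \<le> s2" "s1 + s2 \<le> 1"
  shows "EuH (s1 *\<^sub>R t1 + s2 *\<^sub>R t2 + (1 - s1 - s2) *\<^sub>R t3) = uH (s1 *\<^sub>R t1 + s2 *\<^sub>R t2 + (1 - s1 - s2) *\<^sub>R t3)"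
proof -
  note dist = aff4_distinct[OF A]
  let ?K = "{t1,t2,t3,w}"
  have "P2B3 ?K EuH" using W K W_def by blast
  then obtain p d where p: "poly2 p" and rep: "\<forall>x\<in>convex hull ?K. EuH x = p x + (\<Sum>v\<in>?K. d v * face_bubble ?K v x)"
    unfolding P2B3_def by blast
  obtain m0 m1 m2 m3 m4 m5 where m: "\<And>s1 s2. p (s1 *\<^sub>R t1 + s2 *\<^sub>R t2 + (1 - s1 - s2) *\<^sub>R t3)
     = m0 + m1 * s1 + m2 * s2 + m3 * s1 * s1 + m4 * s1 * s2 + m5 * s2 * s2"
    using poly2_plane[OF p, of t1 t2 t3] by blast
  have E: "EuH (s1 *\<^sub>R t1 + s2 *\<^sub>R t2 + (1 - s1 - s2) *\<^sub>R t3) =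
     m0 + m1 * s1 + m2 * s2 + m3 * s1 * s1 + m4 * s1 * s2 + m5 * s2 * s2 + d w * (s1 * s2 * (1 - s1 - s2))"
    if "0 \<le> s1" "0 \<le> s2" "s1 + s2 \<le> 1" for s1 s2
  proof -
    have "s1 *\<^sub>R t1 + s2 *\<^sub>R t2 + (1 - s1 - s2) *\<^sub>R t3 \<in> convex hull {t1,t2,t3}"
      unfolding convex_hull_3 using that by force
    also have "\<dots> \<subseteq> convex hull ?K" by (rule hull_mono) auto
    finally have "EuH (s1 *\<^sub>R t1 + s2 *\<^sub>R t2 + (1 - s1 - s2) *\<^sub>R t3) =
       p (s1 *\<^sub>R t1 + s2 *\<^sub>R t2 + (1 - s1 - s2) *\<^sub>R t3) + (\<Sum>v\<in>?K. d v * face_bubble ?K v (s1 *\<^sub>R t1 + s2 *\<^sub>R t2 + (1 - s1 - s2) *\<^sub>R t3))"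
      using rep by blast
    also have "\<dots> = m0 + m1 * s1 + m2 * s2 + m3 * s1 * s1 + m4 * s1 * s2 + m5 * s2 * s2 + d w * (s1 * s2 * (1 - s1 - s2))"
      using bubble_face[OF A, of s1 s2 "1 - s1 - s2" d] m by simp
    finally show ?thesis .
  qed
  define h where "h s1 s2 = EuH (s1 *\<^sub>R t1 + s2 *\<^sub>R t2 + (1 - s1 - s2) *\<^sub>R t3) - uH (s1 *\<^sub>R t1 + s2 *\<^sub>R t2 + (1 - s1 - s2) *\<^sub>R t3)" for s1 s2
  define D0 where "D0 = m0 - k0"
  define D1 where "D1 = m1 - k1"
  define D2 where "D2 = m2 - k2"
  define D3 where "D3 = m3 - k3"
  define D4 where "D4 = m4 - k4"
  define D5 where "D5 = m5 - k5"
  define D6 where "D6 = d w - kk"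
  have H: "h s1 s2 = D0 + D1 * s1 + D2 * s2 + D3 * s1 * s1 + D4 * s1 * s2
     + D5 * s2 * s2 + D6 * (s1 * s2 * (1 - s1 - s2))"
    if "0 \<le> s1" "0 \<le> s2" "s1 + s2 \<le> 1" for s1 s2
    using E[OF that] Q[OF that] unfolding h_def D0_def D1_def D2_def D3_def D4_def D5_def D6_def
    by (simp add: algebra_simps)
  have z: "h a b = 0" if "a *\<^sub>R t1 + b *\<^sub>R t2 + (1 - a - b) *\<^sub>R t3 \<in> dof_nodes M" for a b
    using dof that unfolding h_def by simp
  have n1: "h 1 0 = 0" by (rule z) (simp add: dof_vert[OF K])
  have n2: "h 0 1 = 0" by (rule z) (simp add: dof_vert[OF K])
  have n3: "h 0 0 = 0" by (rule z) (simp add: dof_vert[OF K])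
  have n4: "h (1/2) (1/2) = 0"
  proof (rule z)
    have "(1/2) *\<^sub>R t1 + (1/2) *\<^sub>R t2 + (1 - 1/2 - 1/2) *\<^sub>R t3 = midpoint t1 t2"
      by (simp add: midpoint_def scaleR_add_right)
    then show "(1/2) *\<^sub>R t1 + (1/2) *\<^sub>R t2 + (1 - 1/2 - 1/2) *\<^sub>R t3 \<in> dof_nodes M"
      using dof_mid[OF K, of t1 t2] dist by simp
  qed
  have n5: "h (1/2) 0 = 0"
  proof (rule z)
    have "(1/2) *\<^sub>R t1 + 0 *\<^sub>R t2 + (1 - 1/2 - 0) *\<^sub>R t3 = midpoint t1 t3"
      by (simp add: midpoint_def scaleR_add_right)
    then show "(1/2) *\<^sub>R t1 + 0 *\<^sub>R t2 + (1 - 1/2 - 0) *\<^sub>R t3 \<in> dof_nodes M"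
      using dof_mid[OF K, of t1 t3] dist by simp
  qed
  have n6: "h 0 (1/2) = 0"
  proof (rule z)
    have "0 *\<^sub>R t1 + (1/2) *\<^sub>R t2 + (1 - 0 - 1/2) *\<^sub>R t3 = midpoint t2 t3"
      by (simp add: midpoint_def scaleR_add_right)
    then show "0 *\<^sub>R t1 + (1/2) *\<^sub>R t2 + (1 - 0 - 1/2) *\<^sub>R t3 \<in> dof_nodes M"
      using dof_mid[OF K, of t2 t3] dist by simp
  qed
  have n7: "h (1/3) (1/3) = 0"
  proof (rule z)
    have "(1/3) *\<^sub>R t1 + (1/3) *\<^sub>R t2 + (1 - 1/3 - 1/3) *\<^sub>R t3 = (1/3) *\<^sub>R (t1 + t2 + t3)"
      by (simp add: scaleR_add_right)
    then show "(1/3) *\<^sub>R t1 + (1/3) *\<^sub>R t2 + (1 - 1/3 - 1/3) *\<^sub>R t3 \<in> dof_nodes M"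
      using dof_bc[OF K, of t1 t2 t3] dist by simp
  qed
  have e1: "D0 + D1 + D3 = 0" using n1 H[of 1 0] by simp
  have e2: "D0 + D2 + D5 = 0" using n2 H[of 0 1] by simp
  have e3: "D0 = 0" using n3 H[of 0 0] by simp
  have e4: "D0 + D1/2 + D2/2 + D3/4 + D4/4 + D5/4 = 0"
    using n4 H[of "1/2" "1/2"] by simp
  have e5: "D0 + D1/2 + D3/4 = 0" using n5 H[of "1/2" 0] by simp
  have e6: "D0 + D2/2 + D5/4 = 0" using n6 H[of 0 "1/2"] by simp
  have e7: "D0 + D1/3 + D2/3 + D3/9 + D4/9 + D5/9 + D6/27 = 0"
    using n7 H[of "1/3" "1/3"] by simp
  have c1: "D1 = 0" "D3 = 0" using e1 e5 e3 by linarith+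
  have c2: "D2 = 0" "D5 = 0" using e2 e6 e3 by linarith+
  have c4: "D4 = 0" using e4 e3 c1 c2 by linarith
  have c7: "D6 = 0" using e7 e3 c1 c2 c4 by linarith
  note cs = e3 c1 c2 c4 c7
  have "h s1 s2 = 0" using H[OF s] cs by simp
  then show ?thesis unfolding h_def by simp
qed

definition CR :: "(pt \<Rightarrow> real) \<Rightarrow> (pt \<Rightarrow> real) \<Rightarrow> real \<Rightarrow> pt \<Rightarrow> pt \<Rightarrow> pt \<Rightarrow> bool" where
  "CR uH P D p q r \<longleftrightarrow> (\<forall>la lb lc. 0 \<le> la \<longrightarrow> 0 \<le> lb \<longrightarrow> 0 \<le> lc \<longrightarrow> la + lb + lc = 1 \<longrightarrow>
     uH (la *\<^sub>R p + lb *\<^sub>R q + lc *\<^sub>R r) = P (la *\<^sub>R p + lb *\<^sub>R q + lc *\<^sub>R r) + D * (la * lb * lc))"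

lemma corner_lemma:
  assumes A: "aff4 (midpoint p q) (midpoint p r) p w" and K: "{midpoint p q, midpoint p r, p, w} \<in> M"
    and W: "W M EuH" and dof: "\<forall>z\<in>dof_nodes M. EuH z = uH z"
    and P: "poly2 P" and C: "CR uH P D p q r"
    and l: "0 \<le> lp" "0 \<le> lq" "0 \<le> lr" "lp + lq + lr = 1" "1/2 \<le> lp"
  shows "EuH (lp *\<^sub>R p + lq *\<^sub>R q + lr *\<^sub>R r) = uH (lp *\<^sub>R p + lq *\<^sub>R q + lr *\<^sub>R r)"
proof -
  let ?t1 = "midpoint p q" and ?t2 = "midpoint p r"
  have XY: "s1 *\<^sub>R ?t1 + s2 *\<^sub>R ?t2 + (1 - s1 - s2) *\<^sub>R p =
      (1 - s1/2 - s2/2) *\<^sub>R p + (s1/2) *\<^sub>R q + (s2/2) *\<^sub>R r" for s1 s2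
    by (simp add: vec_eq_iff midpoint_def algebra_simps)
  obtain k0 k1 k2 k3 k4 k5 where k: "\<And>s1 s2. P (s1 *\<^sub>R ?t1 + s2 *\<^sub>R ?t2 + (1 - s1 - s2) *\<^sub>R p)
     = k0 + k1 * s1 + k2 * s2 + k3 * s1 * s1 + k4 * s1 * s2 + k5 * s2 * s2"
    using poly2_plane[OF P, of ?t1 ?t2 p] by blast
  have Q: "uH (s1 *\<^sub>R ?t1 + s2 *\<^sub>R ?t2 + (1 - s1 - s2) *\<^sub>R p) =
       k0 + k1 * s1 + k2 * s2 + k3 * s1 * s1 + (k4 + D/8) * s1 * s2 + k5 * s2 * s2 + (D/8) * (s1 * s2 * (1 - s1 - s2))"
    if "0 \<le> s1" "0 \<le> s2" "s1 + s2 \<le> 1" for s1 s2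
  proof -
    have c: "uH ((1 - s1/2 - s2/2) *\<^sub>R p + (s1/2) *\<^sub>R q + (s2/2) *\<^sub>R r) =
       P ((1 - s1/2 - s2/2) *\<^sub>R p + (s1/2) *\<^sub>R q + (s2/2) *\<^sub>R r) + D * ((1 - s1/2 - s2/2) * (s1/2) * (s2/2))"
      by (rule C[unfolded CR_def, rule_format]) (use that in auto)
    have kk: "P ((1 - s1/2 - s2/2) *\<^sub>R p + (s1/2) *\<^sub>R q + (s2/2) *\<^sub>R r) =
        k0 + k1 * s1 + k2 * s2 + k3 * s1 * s1 + k4 * s1 * s2 + k5 * s2 * s2"
      using k[of s1 s2] unfolding XY .
    show ?thesis unfolding XY c kk by (simp add: algebra_simps)
  qed
  have "EuH ((2*lq) *\<^sub>R ?t1 + (2*lr) *\<^sub>R ?t2 + (1 - 2*lq - 2*lr) *\<^sub>R p) =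
        uH ((2*lq) *\<^sub>R ?t1 + (2*lr) *\<^sub>R ?t2 + (1 - 2*lq - 2*lr) *\<^sub>R p)"
    by (rule tri_lemma[OF A K W dof Q]) (use l in auto)
  moreover have "(2*lq) *\<^sub>R ?t1 + (2*lr) *\<^sub>R ?t2 + (1 - 2*lq - 2*lr) *\<^sub>R p = lp *\<^sub>R p + lq *\<^sub>R q + lr *\<^sub>R r"
  proof -
    have e: "lp = 1 - lq - lr" using l(4) by simp
    show ?thesis unfolding e by (simp add: vec_eq_iff midpoint_def algebra_simps)
  qed
  ultimately show ?thesis by simp
qed

lemma middle_lemma:
  assumes A: "aff4 (midpoint q r) (midpoint p r) (midpoint p q) w"
    and K: "{midpoint q r, midpoint p r, midpoint p q, w} \<in> M"
    and W: "W M EuH" and dof: "\<forall>z\<in>dof_nodes M. EuH z = uH z"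
    and P: "poly2 P" and C: "CR uH P D p q r"
    and l: "0 \<le> lp" "0 \<le> lq" "0 \<le> lr" "lp + lq + lr = 1" "lp \<le> 1/2" "lq \<le> 1/2" "lr \<le> 1/2"
  shows "EuH (lp *\<^sub>R p + lq *\<^sub>R q + lr *\<^sub>R r) = uH (lp *\<^sub>R p + lq *\<^sub>R q + lr *\<^sub>R r)"
proof -
  let ?t1 = "midpoint q r" and ?t2 = "midpoint p r" and ?t3 = "midpoint p q"
  have XY: "s1 *\<^sub>R ?t1 + s2 *\<^sub>R ?t2 + (1 - s1 - s2) *\<^sub>R ?t3 =
      ((1 - s1)/2) *\<^sub>R p + ((1 - s2)/2) *\<^sub>R q + ((s1 + s2)/2) *\<^sub>R r" for s1 s2
    by (simp add: vec_eq_iff midpoint_def field_simps)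
  obtain k0 k1 k2 k3 k4 k5 where k: "\<And>s1 s2. P (s1 *\<^sub>R ?t1 + s2 *\<^sub>R ?t2 + (1 - s1 - s2) *\<^sub>R ?t3)
     = k0 + k1 * s1 + k2 * s2 + k3 * s1 * s1 + k4 * s1 * s2 + k5 * s2 * s2"
    using poly2_plane[OF P, of ?t1 ?t2 ?t3] by blast
  have Q: "uH (s1 *\<^sub>R ?t1 + s2 *\<^sub>R ?t2 + (1 - s1 - s2) *\<^sub>R ?t3) =
       k0 + (k1 + D/8) * s1 + (k2 + D/8) * s2 + (k3 - D/8) * s1 * s1 + (k4 - D/8) * s1 * s2
       + (k5 - D/8) * s2 * s2 + (- D/8) * (s1 * s2 * (1 - s1 - s2))"
    if "0 \<le> s1" "0 \<le> s2" "s1 + s2 \<le> 1" for s1 s2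
  proof -
    have c: "uH (((1 - s1)/2) *\<^sub>R p + ((1 - s2)/2) *\<^sub>R q + ((s1 + s2)/2) *\<^sub>R r) =
       P (((1 - s1)/2) *\<^sub>R p + ((1 - s2)/2) *\<^sub>R q + ((s1 + s2)/2) *\<^sub>R r) + D * (((1 - s1)/2) * ((1 - s2)/2) * ((s1 + s2)/2))"
      by (rule C[unfolded CR_def, rule_format]) (use that in \<open>auto simp: field_simps\<close>)
    have kk: "P (((1 - s1)/2) *\<^sub>R p + ((1 - s2)/2) *\<^sub>R q + ((s1 + s2)/2) *\<^sub>R r) =
        k0 + k1 * s1 + k2 * s2 + k3 * s1 * s1 + k4 * s1 * s2 + k5 * s2 * s2"
      using k[of s1 s2] unfolding XY .
    show ?thesis unfolding XY c kk by (simp add: field_simps)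
  qed
  have "EuH ((1 - 2*lp) *\<^sub>R ?t1 + (1 - 2*lq) *\<^sub>R ?t2 + (1 - (1 - 2*lp) - (1 - 2*lq)) *\<^sub>R ?t3) =
        uH ((1 - 2*lp) *\<^sub>R ?t1 + (1 - 2*lq) *\<^sub>R ?t2 + (1 - (1 - 2*lp) - (1 - 2*lq)) *\<^sub>R ?t3)"
    by (rule tri_lemma[OF A K W dof Q]) (use l in auto)
  moreover have "(1 - 2*lp) *\<^sub>R ?t1 + (1 - 2*lq) *\<^sub>R ?t2 + (1 - (1 - 2*lp) - (1 - 2*lq)) *\<^sub>R ?t3
      = lp *\<^sub>R p + lq *\<^sub>R q + lr *\<^sub>R r"
    unfolding XY using l(4) by (simp add: algebra_simps)
  ultimately show ?thesis by simp
qed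

lemma CR_perm1: "CR uH P D p q r \<Longrightarrow> CR uH P D q p r"
  unfolding CR_def
proof (intro allI impI)
  fix la lb lc :: real
  assume C: "\<forall>la lb lc. 0 \<le> la \<longrightarrow> 0 \<le> lb \<longrightarrow> 0 \<le> lc \<longrightarrow> la + lb + lc = 1 \<longrightarrow>
     uH (la *\<^sub>R p + lb *\<^sub>R q + lc *\<^sub>R r) = P (la *\<^sub>R p + lb *\<^sub>R q + lc *\<^sub>R r) + D * (la * lb * lc)"
    and h: "0 \<le> la" "0 \<le> lb" "0 \<le> lc" "la + lb + lc = 1"
  have e: "la *\<^sub>R q + lb *\<^sub>R p + lc *\<^sub>R r = lb *\<^sub>R p + la *\<^sub>R q + lc *\<^sub>R r" by (simp add: algebra_simps)
  show "uH (la *\<^sub>R q + lb *\<^sub>R p + lc *\<^sub>R r) = P (la *\<^sub>R q + lb *\<^sub>R p + lc *\<^sub>R r) + D * (la * lb * lc)"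
    unfolding e using C[rule_format, of lb la lc] h by (simp add: algebra_simps)
qed

lemma CR_perm2: "CR uH P D p q r \<Longrightarrow> CR uH P D r p q"
  unfolding CR_def
proof (intro allI impI)
  fix la lb lc :: real
  assume C: "\<forall>la lb lc. 0 \<le> la \<longrightarrow> 0 \<le> lb \<longrightarrow> 0 \<le> lc \<longrightarrow> la + lb + lc = 1 \<longrightarrow>
     uH (la *\<^sub>R p + lb *\<^sub>R q + lc *\<^sub>R r) = P (la *\<^sub>R p + lb *\<^sub>R q + lc *\<^sub>R r) + D * (la * lb * lc)"
    and h: "0 \<le> la" "0 \<le> lb" "0 \<le> lc" "la + lb + lc = 1"
  have e: "la *\<^sub>R r + lb *\<^sub>R p + lc *\<^sub>R q = lb *\<^sub>R p + lc *\<^sub>R q + la *\<^sub>R r" by (simp add: algebra_simps)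
  show "uH (la *\<^sub>R r + lb *\<^sub>R p + lc *\<^sub>R q) = P (la *\<^sub>R r + lb *\<^sub>R p + lc *\<^sub>R q) + D * (la * lb * lc)"
    unfolding e using C[rule_format, of lb lc la] h by (simp add: algebra_simps)
qed

lemma face_lemma:
  assumes A: "aff4 p q r v" and PB: "P2B3 {p,q,r,v} uH"
    and W: "W M EuH" and dof: "\<forall>z\<in>dof_nodes M. EuH z = uH z"
    and T1: "{midpoint p q, midpoint p r, p, w1} \<in> M" "aff4 (midpoint p q) (midpoint p r) p w1"
    and T2: "{midpoint q p, midpoint q r, q, w2} \<in> M" "aff4 (midpoint q p) (midpoint q r) q w2"
    and T3: "{midpoint r p, midpoint r q, r, w3} \<in> M" "aff4 (midpoint r p) (midpoint r q) r w3"
    and T4: "{midpoint q r, midpoint p r, midpoint p q, w4} \<in> M" "aff4 (midpoint q r) (midpoint p r) (midpoint p q) w4"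
  shows "\<forall>x\<in>convex hull {p,q,r}. EuH x = uH x"
proof
  fix x assume "x \<in> convex hull {p,q,r}"
  then obtain la lb lc where l: "0 \<le> la" "0 \<le> lb" "0 \<le> lc" "la + lb + lc = 1"
    and x: "x = la *\<^sub>R p + lb *\<^sub>R q + lc *\<^sub>R r"
    unfolding convex_hull_3 by blast
  obtain P d where P: "poly2 P" and rep: "\<forall>y\<in>convex hull {p,q,r,v}. uH y = P y + (\<Sum>w\<in>{p,q,r,v}. d w * face_bubble {p,q,r,v} w y)"
    using PB unfolding P2B3_def by blast
  have C: "CR uH P (d v) p q r"
    unfolding CR_def
  proof (intro allI impI)
    fix a b c :: real assume h: "0 \<le> a" "0 \<le> b" "0 \<le> c" "a + b + c = 1"
    have "a *\<^sub>R p + b *\<^sub>R q + c *\<^sub>R r \<in> convex hull {p,q,r}"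
      unfolding convex_hull_3 using h by blast
    also have "\<dots> \<subseteq> convex hull {p,q,r,v}" by (rule hull_mono) auto
    finally show "uH (a *\<^sub>R p + b *\<^sub>R q + c *\<^sub>R r) = P (a *\<^sub>R p + b *\<^sub>R q + c *\<^sub>R r) + d v * (a * b * c)"
      using rep bubble_face[OF A, of a b c d] h(4) by simp
  qed
  consider "1/2 \<le> la" | "1/2 \<le> lb" | "1/2 \<le> lc" | "la \<le> 1/2" "lb \<le> 1/2" "lc \<le> 1/2" by linarith
  then show "EuH x = uH x"
  proof cases
    case 1
    show ?thesis unfolding x by (rule corner_lemma[OF T1(2) T1(1) W dof P C l 1])
  next
    case 2
    have e: "x = lb *\<^sub>R q + la *\<^sub>R p + lc *\<^sub>R r" unfolding x by (simp add: algebra_simps)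
    show ?thesis unfolding e
      by (rule corner_lemma[OF T2(2) T2(1) W dof P CR_perm1[OF C]]) (use l 2 in auto)
  next
    case 3
    have e: "x = lc *\<^sub>R r + la *\<^sub>R p + lb *\<^sub>R q" unfolding x by (simp add: algebra_simps)
    show ?thesis unfolding e
      by (rule corner_lemma[OF T3(2) T3(1) W dof P CR_perm2[OF C]]) (use l 3 in auto)
  next
    case 4
    show ?thesis unfolding x by (rule middle_lemma[OF T4(2) T4(1) W dof P C l 4])
  qed
qed

lemma aff4_corner: "aff4 a b c d \<Longrightarrow> aff4 a (midpoint a b) (midpoint a c) (midpoint a d)"
  unfolding aff4_def
proof (intro allI impI)
  fix x1 x2 x3 x4 :: real
  assume A: "\<forall>x1 x2 x3 x4. x1 + x2 + x3 + x4 = 0 \<longrightarrow> x1 *\<^sub>R a + x2 *\<^sub>R b + x3 *\<^sub>R c + x4 *\<^sub>R d = 0 \<longrightarrow>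
     x1 = 0 \<and> x2 = 0 \<and> x3 = 0 \<and> x4 = 0"
    and s: "x1 + x2 + x3 + x4 = 0"
    and v: "x1 *\<^sub>R a + x2 *\<^sub>R midpoint a b + x3 *\<^sub>R midpoint a c + x4 *\<^sub>R midpoint a d = 0"
  have "x1 *\<^sub>R a + x2 *\<^sub>R midpoint a b + x3 *\<^sub>R midpoint a c + x4 *\<^sub>R midpoint a d =
     (x1 + x2/2 + x3/2 + x4/2) *\<^sub>R a + (x2/2) *\<^sub>R b + (x3/2) *\<^sub>R c + (x4/2) *\<^sub>R d"
    by (simp add: vec_eq_iff midpoint_def algebra_simps)
  then have v2: "(x1 + x2/2 + x3/2 + x4/2) *\<^sub>R a + (x2/2) *\<^sub>R b + (x3/2) *\<^sub>R c + (x4/2) *\<^sub>R d = 0"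
    using v by simp
  have s2: "(x1 + x2/2 + x3/2 + x4/2) + x2/2 + x3/2 + x4/2 = 0" using s by linarith
  have "x1 + x2/2 + x3/2 + x4/2 = 0 \<and> x2/2 = 0 \<and> x3/2 = 0 \<and> x4/2 = 0"
    by (rule A[rule_format, OF s2 v2])
  then show "x1 = 0 \<and> x2 = 0 \<and> x3 = 0 \<and> x4 = 0" by auto
qed

lemma aff4_inner: "aff4 a b c d \<Longrightarrow> aff4 (midpoint a c) (midpoint b d) (midpoint a b) (midpoint b c)"
  unfolding aff4_def
proof (intro allI impI)
  fix x1 x2 x3 x4 :: real
  assume A: "\<forall>x1 x2 x3 x4. x1 + x2 + x3 + x4 = 0 \<longrightarrow> x1 *\<^sub>R a + x2 *\<^sub>R b + x3 *\<^sub>R c + x4 *\<^sub>R d = 0 \<longrightarrow>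
     x1 = 0 \<and> x2 = 0 \<and> x3 = 0 \<and> x4 = 0"
    and s: "x1 + x2 + x3 + x4 = 0"
    and v: "x1 *\<^sub>R midpoint a c + x2 *\<^sub>R midpoint b d + x3 *\<^sub>R midpoint a b + x4 *\<^sub>R midpoint b c = 0"
  have "x1 *\<^sub>R midpoint a c + x2 *\<^sub>R midpoint b d + x3 *\<^sub>R midpoint a b + x4 *\<^sub>R midpoint b c =
     (x1/2 + x3/2) *\<^sub>R a + (x2/2 + x3/2 + x4/2) *\<^sub>R b + (x1/2 + x4/2) *\<^sub>R c + (x2/2) *\<^sub>R d"
    by (simp add: vec_eq_iff midpoint_def algebra_simps)
  then have v2: "(x1/2 + x3/2) *\<^sub>R a + (x2/2 + x3/2 + x4/2) *\<^sub>R b + (x1/2 + x4/2) *\<^sub>R c + (x2/2) *\<^sub>R d = 0"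
    using v by simp
  have s2: "(x1/2 + x3/2) + (x2/2 + x3/2 + x4/2) + (x1/2 + x4/2) + x2/2 = 0" using s by linarith
  have z: "x1/2 + x3/2 = 0 \<and> x2/2 + x3/2 + x4/2 = 0 \<and> x1/2 + x4/2 = 0 \<and> x2/2 = 0"
    by (rule A[rule_format, OF s2 v2])
  then have "x2 = 0" by linarith
  moreover have "x3 = 0" using z by linarith
  moreover have "x1 = 0" using z by linarith
  moreover have "x4 = 0" using z by linarith
  ultimately show "x1 = 0 \<and> x2 = 0 \<and> x3 = 0 \<and> x4 = 0" by simp
qed

lemma children_tetra:
  assumes A: "aff4 a b c d"
  shows "\<forall>C\<in>red_children a b c d. tetra C"
proof -
  have T: "tetra {a,b,c,d}" using aff4_tetra[OF A] .
  have Ap: "aff4 a' b' c' d'" if "{a',b',c',d'} = {a,b,c,d}" for a' b' c' d'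
    using tetra_aff4[of a' b' c' d'] T that by simp
  have c1: "tetra {a, midpoint a b, midpoint a c, midpoint a d}"
    by (rule aff4_tetra[OF aff4_corner[OF A]])
  have c2: "tetra {b, midpoint a b, midpoint b c, midpoint b d}"
    using aff4_tetra[OF aff4_corner[OF Ap[of b a c d]]] by (auto simp: midpoint_sym insert_commute)
  have c3: "tetra {c, midpoint a c, midpoint b c, midpoint c d}"
    using aff4_tetra[OF aff4_corner[OF Ap[of c a b d]]] by (auto simp: midpoint_sym insert_commute)
  have c4: "tetra {d, midpoint a d, midpoint b d, midpoint c d}"
    using aff4_tetra[OF aff4_corner[OF Ap[of d a b c]]] by (auto simp: midpoint_sym insert_commute)
  have i1: "tetra {midpoint a c, midpoint b d, midpoint a b, midpoint b c}"
    by (rule aff4_tetra[OF aff4_inner[OF A]])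
  have i2: "tetra {midpoint a c, midpoint b d, midpoint b c, midpoint c d}"
    using aff4_tetra[OF aff4_inner[OF Ap[of b c d a]]] by (simp add: midpoint_sym insert_commute)
  have i3: "tetra {midpoint a c, midpoint b d, midpoint c d, midpoint a d}"
    using aff4_tetra[OF aff4_inner[OF Ap[of c d a b]]] by (simp add: midpoint_sym insert_commute)
  have i4: "tetra {midpoint a c, midpoint b d, midpoint a d, midpoint a b}"
    using aff4_tetra[OF aff4_inner[OF Ap[of d a b c]]] by (simp add: midpoint_sym insert_commute)
  show ?thesis unfolding red_children_def Let_def using c1 c2 c3 c4 i1 i2 i3 i4 by simp
qed

lemma child_use:
  assumes "C \<in> red_children a b c d" "\<forall>C\<in>red_children a b c d. C \<in> M" "aff4 a b c d"
    and "{t1,t2,t3,w} = C"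
  shows "{t1,t2,t3,w} \<in> M \<and> aff4 t1 t2 t3 w"
  using assms children_tetra[OF assms(3)] tetra_aff4 by metis

lemma face_from_parent:
  assumes A: "aff4 a b c d" and Ch: "\<forall>C\<in>red_children a b c d. C \<in> M"
    and PB: "P2B3 {a,b,c,d} uH" and W: "W M EuH" and dof: "\<forall>z\<in>dof_nodes M. EuH z = uH z"
  shows "\<forall>x\<in>convex hull {b,c,d}. EuH x = uH x"
proof -
  have T: "tetra {a,b,c,d}" using aff4_tetra[OF A] .
  have e: "{b,c,d,a} = {a,b,c,d}" by auto
  have A2: "aff4 b c d a" using tetra_aff4[of b c d a] T e by simp
  have PB2: "P2B3 {b,c,d,a} uH" using PB e by simp
  have m: "{b, midpoint a b, midpoint b c, midpoint b d} \<in> red_children a b c d"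
     "{c, midpoint a c, midpoint b c, midpoint c d} \<in> red_children a b c d"
     "{d, midpoint a d, midpoint b d, midpoint c d} \<in> red_children a b c d"
     "{midpoint a c, midpoint b d, midpoint b c, midpoint c d} \<in> red_children a b c d"
    by (simp_all add: red_children_def Let_def)
  have T1: "{midpoint b c, midpoint b d, b, midpoint a b} \<in> M \<and> aff4 (midpoint b c) (midpoint b d) b (midpoint a b)"
    by (rule child_use[OF m(1) Ch A]) (auto simp: midpoint_sym)
  have T2: "{midpoint c b, midpoint c d, c, midpoint a c} \<in> M \<and> aff4 (midpoint c b) (midpoint c d) c (midpoint a c)"
    by (rule child_use[OF m(2) Ch A]) (auto simp: midpoint_sym)
  have T3: "{midpoint d b, midpoint d c, d, midpoint a d} \<in> M \<and> aff4 (midpoint d b) (midpoint d c) d (midpoint a d)"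
    by (rule child_use[OF m(3) Ch A]) (auto simp: midpoint_sym)
  have T4: "{midpoint c d, midpoint b d, midpoint b c, midpoint a c} \<in> M \<and> aff4 (midpoint c d) (midpoint b d) (midpoint b c) (midpoint a c)"
    by (rule child_use[OF m(4) Ch A]) (auto simp: midpoint_sym)
  show ?thesis
    using face_lemma[OF A2 PB2 W dof] T1 T2 T3 T4 by blast
qed

lemma red_rot: "red_children b c d a = red_children a b c d"
  by (simp add: red_children_def Let_def midpoint_sym insert_commute)

theorem mainTheorem3:
  fixes Omega :: "pt set" and MH Mh :: "pt set set" and uH EuH :: "pt \<Rightarrow> real"
  assumes "mesh MH Omega"
    and "uniform_refinement Mh MH"
    and "W MH uH"
    and "W Mh EuH"
    and "\<forall>z\<in>dof_nodes Mh. EuH z = uH z"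
  shows "\<forall>F\<in>faces MH. \<forall>x\<in>convex hull F. EuH x = uH x"
proof
  fix F assume "F \<in> faces MH"
  then obtain K v where K: "K \<in> MH" and v: "v \<in> K" and F: "F = K - {v}"
    unfolding faces_def by blast
  obtain ch where ch: "\<forall>K\<in>MH. \<exists>a b c d. K = {a, b, c, d} \<and> ch K = red_children a b c d"
    and Mh: "Mh = (\<Union>K\<in>MH. ch K)"
    using assms(2) unfolding uniform_refinement_def by blast
  from bspec[OF ch K] obtain a b c d where Kabcd: "K = {a,b,c,d}" and chK: "ch K = red_children a b c d"
    by (elim exE conjE)
  have Ch: "\<forall>C\<in>red_children a b c d. C \<in> Mh"
  proof
    fix C assume "C \<in> red_children a b c d"
    then have "C \<in> ch K" using chK by simp
    then show "C \<in> Mh" unfolding Mh using K by blast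
  qed
  have T: "tetra {a,b,c,d}" using assms(1) K Kabcd unfolding mesh_def by blast
  have A: "aff4 a b c d" using tetra_aff4[OF T] .
  note dist = aff4_distinct[OF A]
  have PB: "P2B3 {a,b,c,d} uH" using assms(3) K Kabcd unfolding W_def by blast
  have Ap: "aff4 a' b' c' d'" if "{a',b',c',d'} = {a,b,c,d}" for a' b' c' d'
    using tetra_aff4[of a' b' c' d'] T that by simp
  have PBp: "P2B3 {a',b',c',d'} uH" if "{a',b',c',d'} = {a,b,c,d}" for a' b' c' d'
    using PB that by simp
  have r1: "red_children b c d a = red_children a b c d" by (rule red_rot)
  have r2: "red_children c d a b = red_children a b c d" using red_rot[of c d a b] red_rot[of b c d a] r1 by simp
  have r3: "red_children d a b c = red_children a b c d" using red_rot[of d a b c] r2 by simp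
  have "v = a \<or> v = b \<or> v = c \<or> v = d" using v Kabcd by auto
  then show "\<forall>x\<in>convex hull F. EuH x = uH x"
  proof (elim disjE)
    assume "v = a"
    then have "F = {b,c,d}" using F Kabcd dist by auto
    then show ?thesis using face_from_parent[OF A Ch PB assms(4,5)] by simp
  next
    assume "v = b"
    then have "F = {c,d,a}" using F Kabcd dist by auto
    then show ?thesis
      using face_from_parent[OF Ap[of b c d a] _ PBp[of b c d a] assms(4,5)] Ch r1 by (auto simp: insert_commute)
  next
    assume "v = c"
    then have "F = {d,a,b}" using F Kabcd dist by auto
    then show ?thesis
      using face_from_parent[OF Ap[of c d a b] _ PBp[of c d a b] assms(4,5)] Ch r2 by (auto simp: insert_commute)
  next
    assume "v = d"
    then have "F = {a,b,c}" using F Kabcd dist by auto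
    then show ?thesis
      using face_from_parent[OF Ap[of d a b c] _ PBp[of d a b c] assms(4,5)] Ch r3 by (auto simp: insert_commute)
  qed
qed

end
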